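(* Let $\mathbb{F}$ be an algebraically closed field. Let $A_1,\dots,A_4,B_1,\dots,B_4\in M(2)$ satisfy the Standing Hypothesis, and suppose $A_1=\begin{pmatrix}a_1&1\\0&a_1\end{pmatrix}$ and $B_1=\begin{pmatrix}b_1&0\\0&b_4\end{pmatrix}$ for some $a_1,b_1,b_4\in\mathbb{F}$. Then $\mathrm{tr}(A_1A_2A_3A_4)=\mathrm{tr}(B_1B_2B_3B_4)$.
   Context: $M(2)$ is the space of $2\times 2$ matrices over $\mathbb{F}$. Standing Hypothesis: $\mathrm{tr}(A_i)=\mathrm{tr}(B_i)$ and $\det(A_i)=\det(B_i)$ for $1\le i\le 4$; $\mathrm{tr}(A_iA_j)=\mathrm{tr}(B_iB_j)$ for $1\le i<j\le 4$; $\mathrm{tr}(A_iA_jA_k)=\mathrm{tr}(B_iB_jB_k)$ for $1\le i<j<k\le 4$. *)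

theory Defs
  imports "HOL-Analysis.Analysis" "HOL-Computational_Algebra.Polynomial"
begin

definition mat2 :: "'a::zero \<Rightarrow> 'a \<Rightarrow> 'a \<Rightarrow> 'a \<Rightarrow> 'a^2^2" where
  "mat2 a b c d = vector [vector [a, b], vector [c, d]]"

definition standing_hyp :: "(nat \<Rightarrow> 'a::comm_ring_1^2^2) \<Rightarrow> (nat \<Rightarrow> 'a^2^2) \<Rightarrow> bool" where
  "standing_hyp A B \<longleftrightarrow>
     (\<forall>i\<in>{1..4}. trace (A i) = trace (B i) \<and> det (A i) = det (B i)) \<and>
     (\<forall>i j. 1 \<le> i \<and> i < j \<and> j \<le> 4 \<longrightarrow> trace (A i ** A j) = trace (B i ** B j)) \<and>
     (\<forall>i j k. 1 \<le> i \<and> i < j \<and> j < k \<and> k \<le> 4 \<longrightarrow>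
        trace (A i ** A j ** A k) = trace (B i ** B j ** B k))"

end

theory Submission
  imports Defs
begin

lemma tr2: "trace (M::'a::comm_ring_1^2^2) = M$1$1 + M$2$2"
  by (simp add: trace_def UNIV_2)
lemma mm2: "((M::'a::comm_ring_1^2^2) ** N)$i$j = M$i$1*N$1$j + M$i$2*N$2$j"
  by (simp add: matrix_matrix_mult_def UNIV_2)
lemma mat2_e: "mat2 a b c d $1$1 = a" "mat2 a b c d $1$2 = b" "mat2 a b c d $2$1 = c" "mat2 a b c d $2$2 = d"
  by (simp_all add: mat2_def)

theorem lemma6:
  fixes A B :: "nat \<Rightarrow> 'a::alg_closed_field^2^2"
    and a1 b1 b4 :: 'a
  assumes "standing_hyp A B"
    and "A 1 = mat2 a1 1 0 a1"
    and "B 1 = mat2 b1 0 0 b4"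
  shows "trace (A 1 ** A 2 ** A 3 ** A 4) = trace (B 1 ** B 2 ** B 3 ** B 4)"
proof -
  note H = assms(1)[unfolded standing_hyp_def]
  have t1: "trace (A 1) = trace (B 1)" and d1: "det (A 1) = det (B 1)" using H by auto
  have s: "a1 + a1 = b1 + b4" using t1 unfolding assms(2,3) tr2 mat2_e by simp
  have p: "a1 * a1 = b1 * b4" using d1 unfolding assms(2,3) det_2 mat2_e by simp
  have "(b1 - a1)^2 = 0"
  proof -
    have "b4 = a1 + a1 - b1" using s by (simp add: algebra_simps)
    with p show ?thesis by (simp add: power2_eq_square algebra_simps)
  qed
  hence hb1: "b1 = a1" by simp
  have hb4: "b4 = a1" using s hb1 by simp
  have q: "A i $2$1 = 0" if "i \<in> {2,3,4}" for i
  proof -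
    have x1: "trace (A 1 ** A i) = trace (B 1 ** B i)" using H that by auto
    have x2: "trace (A i) = trace (B i)" using H that by auto
    have e1: "A i$2$1 + a1*(A i$1$1 + A i$2$2) = a1*(B i$1$1 + B i$2$2)"
      using x1 unfolding assms(2,3) tr2 mm2 mat2_e hb1 hb4 by (simp add: algebra_simps)
    have e2: "A i$1$1 + A i$2$2 = B i$1$1 + B i$2$2"
      using x2 unfolding tr2 .
    from e1 have "A i$2$1 + a1*(B i$1$1 + B i$2$2) = a1*(B i$1$1 + B i$2$2)" by (simp only: e2)
    then show ?thesis by simp
  qed
  have t234: "trace (A 2 ** A 3 ** A 4) = trace (B 2 ** B 3 ** B 4)" using H by auto
  have la: "trace (A 1 ** A 2 ** A 3 ** A 4) = a1 * trace (A 2 ** A 3 ** A 4)"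
    using q[of 2] q[of 3] q[of 4]
    unfolding assms(2,3) tr2 mm2 mat2_e by (simp add: algebra_simps)
  have lb: "trace (B 1 ** B 2 ** B 3 ** B 4) = a1 * trace (B 2 ** B 3 ** B 4)"
    unfolding assms(2,3) tr2 mm2 mat2_e hb1 hb4 by (simp add: algebra_simps)
  show ?thesis using la lb t234 by simp
qed

end
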